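(* Consider the most-profitable-augmenting-path algorithm (described in the context) run on an instance of the maximum-weight online bipartite left-perfect matching problem with budget $k=4$. Then for each $v\in R$, the loss $\ell^t_v$ is non-decreasing in $t$ for $t=1,\dots,n+1$.
   Context: Problem: $G=(L\cup R,E)$ is a complete bipartite graph with $n:=|L|\le|R|$ and edge weights $w:E\to\mathbb{Q}_{\ge0}$. The algorithm initially knows $R$; at timestep $t=1,\dots,n$ the vertex $u_t\in L$ arrives with all incident edges and their weights. At the end of each timestep the algorithm outputs a left-perfect matching of the revealed graph (every arrived vertex of $L$ matched), obtainable from the previous one (empty initially) by at most $4$ (re)assignments (the number of vertices of nonzero degree in the symmetric difference of the two matchings); matched vertices stay matched. Algorithm: when $u_t$ arrives, among all augmenting paths with respect to the current matching $M$ that contain $u_t$ and have length at most $3$, choose one $P$ maximizing the weight of $M\triangle P$ minus the weight of $M$, and output $M\triangle P$. Notation: $M_t$ is the matching at the beginning of timestep $t$ (output at time $t-1$; $M_1=\emptyset$, $M_{n+1}$ is the final matching); $R^t_{\mathsf{exp}}$ is the set of vertices of $R$ not covered by $M_t$; $M_t(v)$ is the partner of $v$ in $M_t$. For $v\in R$, the loss $\ell^t_v:=w(M_t(v),v)-\max_{v'\in R^t_{\mathsf{exp}}}w(M_t(v),v')$ if $v$ is matched in $M_t$, and $\ell^t_v:=0$ otherwise, with the convention $\max\emptyset:=0$. *)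

theory Defs
  imports Complex_Main
begin

text \<open>Matchings are sets of edges (l, r) with l in L (type 'a) and r in R (type 'b).
  The graph is complete bipartite, so every pair is an edge.\<close>

definition weight :: "('a \<Rightarrow> 'b \<Rightarrow> rat) \<Rightarrow> ('a \<times> 'b) set \<Rightarrow> rat" where
  "weight w M = (\<Sum>e\<in>M. w (fst e) (snd e))"

definition symdiff :: "'c set \<Rightarrow> 'c set \<Rightarrow> 'c set" where
  "symdiff A B = (A - B) \<union> (B - A)"

text \<open>Edge sets of the augmenting paths w.r.t. M of length at most 3 that contain the
  (unmatched) left vertex u.  Since u is unmatched it is an endpoint; the other endpoint
  is an unmatched right vertex; paths in a bipartite graph between the two sides have odd
  length, so the length is 1 (u - r) or 3 (u - r1 - u' - r2 with (u',r1) in M).\<close>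

definition aug_paths :: "'b set \<Rightarrow> ('a \<times> 'b) set \<Rightarrow> 'a \<Rightarrow> ('a \<times> 'b) set set" where
  "aug_paths R M u =
     (if u \<in> Domain M then {} else
       {{(u, r)} | r. r \<in> R \<and> r \<notin> Range M}
       \<union> {{(u, r1), (u', r1), (u', r2)} | u' r1 r2.
            (u', r1) \<in> M \<and> r1 \<in> R \<and> r2 \<in> R \<and> r2 \<notin> Range M})"

definition gain :: "('a \<Rightarrow> 'b \<Rightarrow> rat) \<Rightarrow> ('a \<times> 'b) set \<Rightarrow> ('a \<times> 'b) set \<Rightarrow> rat" where
  "gain w M P = weight w (symdiff M P) - weight w M"

text \<open>One step of the algorithm (ties broken arbitrarily).\<close>
definition alg_step :: "('a \<Rightarrow> 'b \<Rightarrow> rat) \<Rightarrow> 'b set \<Rightarrow> ('a \<times> 'b) set \<Rightarrow> 'a \<Rightarrow> ('a \<times> 'b) set \<Rightarrow> bool" where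
  "alg_step w R M u M' \<longleftrightarrow>
     (\<exists>P\<in>aug_paths R M u. M' = symdiff M P \<and>
        (\<forall>Q\<in>aug_paths R M u. gain w M Q \<le> gain w M P))"

definition max0 :: "('b \<Rightarrow> rat) \<Rightarrow> 'b set \<Rightarrow> rat" where
  "max0 f S = (if S = {} then 0 else Max (f ` S))"

definition partner :: "('a \<times> 'b) set \<Rightarrow> 'b \<Rightarrow> 'a" where
  "partner M v = (THE a. (a, v) \<in> M)"

definition R_exp :: "'b set \<Rightarrow> ('a \<times> 'b) set \<Rightarrow> 'b set" where
  "R_exp R M = R - Range M"

definition loss :: "('a \<Rightarrow> 'b \<Rightarrow> rat) \<Rightarrow> 'b set \<Rightarrow> ('a \<times> 'b) set \<Rightarrow> 'b \<Rightarrow> rat" where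
  "loss w R M v = (if v \<in> Range M
      then w (partner M v) v - max0 (w (partner M v)) (R_exp R M)
      else 0)"

end

theory Submission
  imports Defs
begin

definition ru :: "('a \<times> 'b) set \<Rightarrow> bool" where
  "ru M \<longleftrightarrow> (\<forall>a b v. (a,v)\<in>M \<longrightarrow> (b,v)\<in>M \<longrightarrow> a=b)"

lemma partner_eq: "ru M \<Longrightarrow> (a,v)\<in>M \<Longrightarrow> partner M v = a"
  unfolding partner_def ru_def by (rule the_equality) auto

lemma max0_ge: "finite S \<Longrightarrow> x \<in> S \<Longrightarrow> f x \<le> max0 f S"
  unfolding max0_def by auto

lemma max0_le: "finite S \<Longrightarrow> (\<forall>x\<in>S. f x \<le> c) \<Longrightarrow> 0 \<le> c \<Longrightarrow> max0 f S \<le> c"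
  unfolding max0_def by auto

lemma max0_mono: "finite S' \<Longrightarrow> S \<subseteq> S' \<Longrightarrow> (\<And>x. 0 \<le> f x) \<Longrightarrow> max0 f S \<le> max0 f S'"
proof -
  assume a: "finite S'" "S \<subseteq> S'" "\<And>x. 0 \<le> f x"
  have "0 \<le> max0 f S'" using a unfolding max0_def
    by (auto intro: order_trans[OF _ Max_ge])
  then show ?thesis using a by (intro max0_le) (auto intro: max0_ge finite_subset)
qed

lemma gain1:
  assumes "finite M" "(u,r) \<notin> M"
  shows "gain w M {(u,r)} = w u r"
proof -
  have "symdiff M {(u,r)} = insert (u,r) M" using assms unfolding symdiff_def by auto
  then show ?thesis using assms unfolding gain_def weight_def by simp
qed

lemma sd3:
  assumes "(u',r1)\<in>M" "(u,r1)\<notin>M" "(u',r2)\<notin>M" "u\<noteq>u'" "r1\<noteq>r2"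
  shows "symdiff M {(u,r1),(u',r1),(u',r2)} = insert (u,r1) (insert (u',r2) (M - {(u',r1)}))"
  using assms unfolding symdiff_def by auto

lemma gain3:
  assumes "finite M" "(u',r1)\<in>M" "(u,r1)\<notin>M" "(u',r2)\<notin>M" "u\<noteq>u'" "r1\<noteq>r2"
  shows "gain w M {(u,r1),(u',r1),(u',r2)} = w u r1 + w u' r2 - w u' r1"
proof -
  have "weight w (M - {(u',r1)}) = weight w M - w u' r1"
    using assms unfolding weight_def by (simp add: sum_diff1)
  then show ?thesis using assms unfolding gain_def sd3[OF assms(2-6)] weight_def
    by simp
qed

lemma step:
  assumes R: "finite R" and w: "\<And>a b. 0 \<le> w a b" and fM: "finite M" and ruM: "ru M"
    and uD: "u \<notin> Domain M" and st: "alg_step w R M u M'"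
  shows "finite M' \<and> ru M' \<and> Domain M' \<subseteq> insert u (Domain M) \<and>
         (\<forall>v\<in>R. loss w R M v \<le> loss w R M' v)"
proof -
  obtain P where P: "P \<in> aug_paths R M u" and M': "M' = symdiff M P"
    and opt: "\<And>Q. Q \<in> aug_paths R M u \<Longrightarrow> gain w M Q \<le> gain w M P"
    using st unfolding alg_step_def by blast
  define F where "F = R - Range M"
  have fF: "finite F" using R F_def by simp
  have A1: "{(u,x)} \<in> aug_paths R M u" if "x \<in> F" for x
    using that uD unfolding aug_paths_def F_def by auto
  have A3: "{(u,r1),(u',r1),(u',x)} \<in> aug_paths R M u"
    if "x \<in> F" "(u',r1) \<in> M" "r1 \<in> R" for x u' r1
  proof -
    have "{(u,r1),(u',r1),(u',x)} \<in> {{(u, r1), (u', r1), (u', r2)} |u' r1 r2.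
            (u', r1) \<in> M \<and> r1 \<in> R \<and> r2 \<in> R \<and> r2 \<notin> Range M}"
      using that unfolding F_def by blast
    then show ?thesis using uD unfolding aug_paths_def by simp
  qed
  have ga1: "gain w M {(u,x)} = w u x" if "x \<in> F" for x
    using that uD fM by (intro gain1) (auto simp: F_def)
  have ga3: "gain w M {(u,r1),(u',r1),(u',x)} = w u r1 + w u' x - w u' r1"
    if "x \<in> F" "(u',r1) \<in> M" for x u' r1
    using that uD fM by (intro gain3) (auto simp: F_def)
  have lossM: "loss w R M v = (if v \<in> Range M then w (partner M v) v - max0 (w (partner M v)) F else 0)" for v
    unfolding loss_def R_exp_def F_def by simp
  show ?thesis
  proof (cases "\<exists>r. r \<in> R \<and> r \<notin> Range M \<and> P = {(u,r)}")
    case True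
    then obtain r where r: "r \<in> F" and Pr: "P = {(u,r)}" unfolding F_def by auto
    have uM: "(u,r) \<notin> M" using uD by auto
    have M'e: "M' = insert (u,r) M" using M' Pr uM unfolding symdiff_def by auto
    have ruM': "ru M'" using ruM r unfolding M'e ru_def F_def by auto
    have F': "R - Range M' = F - {r}" unfolding M'e F_def by auto
    have best: "w u x \<le> w u r" if "x \<in> F" for x
      using opt[OF A1[OF that]] ga1[OF that] ga1[OF r] Pr by simp
    have lossM': "loss w R M' v = (if v \<in> Range M' then w (partner M' v) v - max0 (w (partner M' v)) (F - {r}) else 0)" for v
      unfolding loss_def R_exp_def F' by simp
    have "loss w R M v \<le> loss w R M' v" if v: "v \<in> R" for v
    proof (cases "v = r")
      case True
      have "v \<notin> Range M" using r True F_def by auto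
      moreover have "partner M' v = u" using ruM' True by (intro partner_eq) (auto simp: M'e)
      moreover have "max0 (w u) (F - {r}) \<le> w u r" using fF best w by (intro max0_le) auto
      ultimately show ?thesis unfolding lossM lossM' using True by (simp add: M'e)
    next
      case False
      show ?thesis
      proof (cases "v \<in> Range M")
        case True
        then obtain a where a: "(a,v) \<in> M" by auto
        have p1: "partner M v = a" using ruM a by (rule partner_eq)
        have p2: "partner M' v = a" using ruM' a by (intro partner_eq) (auto simp: M'e)
        have "max0 (w a) (F - {r}) \<le> max0 (w a) F" using fF w by (intro max0_mono) auto
        then show ?thesis unfolding lossM lossM' using True p1 p2 by (simp add: M'e)
      next
        case False
        then show ?thesis unfolding lossM lossM' using \<open>v \<noteq> r\<close> by (simp add: M'e)
      qed
    qed
    then show ?thesis using fM ruM' unfolding M'e by auto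
  next
    case False
    then obtain u' r1 r2 where Pe: "P = {(u,r1),(u',r1),(u',r2)}" and m: "(u',r1) \<in> M"
      and r1: "r1 \<in> R" and r2: "r2 \<in> F"
      using P uD unfolding aug_paths_def F_def by auto
    have uu: "u \<noteq> u'" using uD m by auto
    have r12: "r1 \<noteq> r2" using m r2 F_def by auto
    have n1: "(u,r1) \<notin> M" using uD by auto
    have n2: "(u',r2) \<notin> M" using r2 F_def by auto
    have M'e: "M' = insert (u,r1) (insert (u',r2) (M - {(u',r1)}))"
      using M' Pe sd3[OF m n1 n2 uu r12] by simp
    have ruM': "ru M'" using ruM r2 m uu r12 unfolding M'e ru_def F_def by blast
    have F': "R - Range M' = F - {r2}" using m unfolding M'e F_def by auto
    have lossM': "loss w R M' v = (if v \<in> Range M' then w (partner M' v) v - max0 (w (partner M' v)) (F - {r2}) else 0)" for v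
      unfolding loss_def R_exp_def F' by simp
    have gP: "gain w M P = w u r1 + w u' r2 - w u' r1" using ga3[OF r2 m] Pe by simp
    have b1: "w u x \<le> w u r1 + w u' r2 - w u' r1" if "x \<in> F" for x
      using opt[OF A1[OF that]] ga1[OF that] gP by simp
    have b3: "w u' x \<le> w u' r2" if "x \<in> F" for x
      using opt[OF A3[OF that m r1]] ga3[OF that m] gP by simp
    have "loss w R M v \<le> loss w R M' v" if v: "v \<in> R" for v
    proof (cases "v = r2")
      case True
      have "v \<notin> Range M" using r2 True F_def by auto
      moreover have "partner M' v = u'" using ruM' True by (intro partner_eq) (auto simp: M'e)
      moreover have "max0 (w u') (F - {r2}) \<le> w u' r2" using fF b3 w by (intro max0_le) auto
      moreover have "v \<in> Range M'" using True M'e by auto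
      ultimately show ?thesis unfolding lossM lossM' using True by simp
    next
      case False
      show ?thesis
      proof (cases "v = r1")
        case True
        have p1: "partner M v = u'" using ruM m True by (simp add: partner_eq)
        have p2: "partner M' v = u" using ruM' True by (intro partner_eq) (auto simp: M'e)
        have mx: "w u' r2 \<le> max0 (w u') F" using fF r2 by (rule max0_ge)
        have "w u r2 \<le> w u r1 + w u' r2 - w u' r1" using b1[OF r2] .
        moreover have "0 \<le> w u r2" using w .
        ultimately have c0: "0 \<le> w u r1 - w u' r1 + max0 (w u') F" using mx by simp
        have "max0 (w u) (F - {r2}) \<le> w u r1 - w u' r1 + max0 (w u') F"
          using fF c0 b1 mx by (intro max0_le) force+
        moreover have "v \<in> Range M" "v \<in> Range M'" using m True M'e by auto
        ultimately show ?thesis unfolding lossM lossM' using p1 p2 True by simp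
      next
        case False
        show ?thesis
        proof (cases "v \<in> Range M")
          case True
          then obtain a where a: "(a,v) \<in> M" by auto
          have p1: "partner M v = a" using ruM a by (rule partner_eq)
          have p2: "partner M' v = a" using ruM' a \<open>v \<noteq> r1\<close> by (intro partner_eq) (auto simp: M'e)
          have "max0 (w a) (F - {r2}) \<le> max0 (w a) F" using fF w by (intro max0_mono) auto
          moreover have "v \<in> Range M'" using a \<open>v \<noteq> r1\<close> M'e by auto
          ultimately show ?thesis unfolding lossM lossM' using True p1 p2 by simp
        next
          case False
          then have "v \<notin> Range M'" using \<open>v \<noteq> r1\<close> \<open>v \<noteq> r2\<close> M'e by auto
          then show ?thesis unfolding lossM lossM' using False by simp
        qed
      qed
    qed
    moreover have "Domain M' \<subseteq> insert u (Domain M)" using M'e m by auto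
    ultimately show ?thesis using fM ruM' unfolding M'e by auto
  qed
qed

theorem lemma4:
  fixes w :: "'a \<Rightarrow> 'b \<Rightarrow> rat"
    and R :: "'b set"
    and u :: "nat \<Rightarrow> 'a"
    and n :: nat
    and M :: "nat \<Rightarrow> ('a \<times> 'b) set"
  assumes "finite R"
    and "n \<le> card R"
    and "inj_on u {1..n}"
    and "\<And>a b. w a b \<ge> 0"
    and "M 1 = {}"
    and "\<And>t. 1 \<le> t \<Longrightarrow> t \<le> n \<Longrightarrow> alg_step w R (M t) (u t) (M (Suc t))"
  shows "\<forall>v\<in>R. \<forall>t s. 1 \<le> t \<longrightarrow> t \<le> s \<longrightarrow> s \<le> n + 1 \<longrightarrow>
           loss w R (M t) v \<le> loss w R (M s) v"
proof -
  have inv: "finite (M t) \<and> ru (M t) \<and> Domain (M t) \<subseteq> u ` {1..<t}"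
    if "1 \<le> t" "t \<le> n + 1" for t
    using that
  proof (induction t rule: dec_induct)
    case base
    then show ?case using assms(5) by (simp add: ru_def)
  next
    case (step t)
    have ud: "u t \<notin> Domain (M t)"
    proof
      assume "u t \<in> Domain (M t)"
      then obtain i where "i \<in> {1..<t}" "u t = u i" using step by auto
      moreover have "i \<in> {1..n}" "t \<in> {1..n}" using calculation(1) step.hyps that by auto
      ultimately have "i = t" using inj_onD[OF assms(3)] by metis
      then show False using \<open>i \<in> {1..<t}\<close> by simp
    qed
    have AS: "alg_step w R (M t) (u t) (M (Suc t))" using assms(6) step.hyps that by auto
    have I: "finite (M t)" "ru (M t)" "Domain (M t) \<subseteq> u ` {1..<t}" using step by auto
    have "finite (M (Suc t)) \<and> ru (M (Suc t)) \<and> Domain (M (Suc t)) \<subseteq> insert (u t) (Domain (M t))"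
      using Submission.step[OF assms(1) assms(4) I(1,2) ud AS] by blast
    moreover have "insert (u t) (Domain (M t)) \<subseteq> u ` {1..<Suc t}" using I(3) step.hyps by auto
    ultimately show ?case by blast
  qed
  have mono: "loss w R (M t) v \<le> loss w R (M (Suc t)) v"
    if "1 \<le> t" "t \<le> n" "v \<in> R" for t v
  proof -
    have I: "finite (M t)" "ru (M t)" "Domain (M t) \<subseteq> u ` {1..<t}" using inv that by auto
    have ud: "u t \<notin> Domain (M t)"
    proof
      assume "u t \<in> Domain (M t)"
      then obtain i where "i \<in> {1..<t}" "u t = u i" using I by auto
      moreover have "i \<in> {1..n}" "t \<in> {1..n}" using calculation(1) that by auto
      ultimately have "i = t" using inj_onD[OF assms(3)] by metis
      then show False using \<open>i \<in> {1..<t}\<close> by simp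
    qed
    show ?thesis using Submission.step[OF assms(1) assms(4) I(1,2) ud assms(6)[OF that(1,2)]] that by blast
  qed
  show ?thesis
  proof (intro ballI allI impI)
    fix v t s assume v: "v \<in> R" and t: "1 \<le> t" and ts: "t \<le> s" and s: "s \<le> n + 1"
    from ts s show "loss w R (M t) v \<le> loss w R (M s) v"
    proof (induction s rule: dec_induct)
      case base then show ?case by simp
    next
      case (step s)
      have "1 \<le> s" "s \<le> n" using step t by auto
      then show ?case using mono[of s v] v step by simp
    qed
  qed
qed

end
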